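(* Let $(E,C)$ be a separated graph with $E^0$ and $E^1$ countable (finite or countably infinite), and let $S\subseteq C_{fin}$. Then there exists an $(E,C,S)$-algebraic branching system $(\mathfrak{X},\{R_e\}_{e\in E^1},\{D_v\}_{v\in E^0},\{f_e\}_{e\in E^1})$ with $\mathfrak{X}\subseteq\mathbb{R}$ such that, for every non-sink $v\in E^0$: 1. $R_e\cap R_f\neq\emptyset$ for each $e\in X$, $f\in Y$, whenever $X,Y\in C_v$ with $X\neq Y$; 2. for each $X\in C_v\setminus S$, $\bigcup_{e\in X}R_e\subsetneq D_v$; 3. for $X,Y\in C_v\setminus S$ with $X\neq Y$, $\bigcup_{e\in X}R_e\neq\bigcup_{f\in Y}R_f$.
   Context: A separated graph is a pair $(E,C)$ where $E=(E^0,E^1,r,s)$ is a directed graph (vertex set $E^0$, edge set $E^1$, range and source maps $r,s:E^1\to E^0$) and $C=\bigcup_{v\in E^0}C_v$, where for each non-sink $v$ (i.e. $s^{-1}(v)\neq\emptyset$), $C_v$ is a partition of $s^{-1}(v)$ into pairwise disjoint nonempty sets. $C_{fin}$ denotes the set of all finite sets $Y\in C$. Given $(E,C)$ and $S\subseteq C_{fin}$, an $(E,C,S)$-algebraic branching system consists of a set $\mathfrak{X}$, families of subsets $\{R_e\}_{e\in E^1}$, $\{D_v\}_{v\in E^0}$ of $\mathfrak{X}$ and maps $f_e$ such that: (1) $R_e\cap R_d=\emptyset$ for $d,e\in Y$, $d\neq e$, $Y\in C$; (2) $D_u\cap D_v=\emptyset$ for $u\neq v$ in $E^0$; (3) $R_e\subseteq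 D_{s(e)}$ for each $e\in E^1$; (4) $D_v=\bigcup_{e\in Y}R_e$ whenever $Y\in S\cap C_v$, for each non-sink $v$; (5) for each $e\in E^1$, $f_e:D_{r(e)}\to R_e$ is a bijection. *)

theory Defs
  imports Complex_Main "HOL-Library.Countable_Set"
begin

text \<open>A directed graph E = (V, Ed, r, s) with vertex set V, edge set Ed,
  range map r and source map s (relevant only on Ed).\<close>

definition source_set :: "'e set \<Rightarrow> ('e \<Rightarrow> 'v) \<Rightarrow> 'v \<Rightarrow> 'e set" where
  "source_set Ed s v = {e \<in> Ed. s e = v}"

definition is_sink :: "'e set \<Rightarrow> ('e \<Rightarrow> 'v) \<Rightarrow> 'v \<Rightarrow> bool" where
  "is_sink Ed s v \<longleftrightarrow> source_set Ed s v = {}"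

definition separated_graph ::
  "'v set \<Rightarrow> 'e set \<Rightarrow> ('e \<Rightarrow> 'v) \<Rightarrow> ('e \<Rightarrow> 'v) \<Rightarrow> ('v \<Rightarrow> 'e set set) \<Rightarrow> bool" where
  "separated_graph V Ed r s C \<longleftrightarrow>
     (\<forall>e\<in>Ed. r e \<in> V \<and> s e \<in> V) \<and>
     (\<forall>v\<in>V. if is_sink Ed s v then C v = {}
             else (\<Union>(C v) = source_set Ed s v \<and>
                   (\<forall>X\<in>C v. X \<noteq> {}) \<and>
                   (\<forall>X\<in>C v. \<forall>Y\<in>C v. X \<noteq> Y \<longrightarrow> X \<inter> Y = {})))"

definition C_all :: "'v set \<Rightarrow> ('v \<Rightarrow> 'e set set) \<Rightarrow> 'e set set" where
  "C_all V C = (\<Union>v\<in>V. C v)"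

definition C_fin :: "'v set \<Rightarrow> ('v \<Rightarrow> 'e set set) \<Rightarrow> 'e set set" where
  "C_fin V C = {Y \<in> C_all V C. finite Y}"

definition algebraic_branching_system ::
  "'v set \<Rightarrow> 'e set \<Rightarrow> ('e \<Rightarrow> 'v) \<Rightarrow> ('e \<Rightarrow> 'v) \<Rightarrow> ('v \<Rightarrow> 'e set set) \<Rightarrow> 'e set set
   \<Rightarrow> 'x set \<Rightarrow> ('e \<Rightarrow> 'x set) \<Rightarrow> ('v \<Rightarrow> 'x set) \<Rightarrow> ('e \<Rightarrow> 'x \<Rightarrow> 'x) \<Rightarrow> bool" where
  "algebraic_branching_system V Ed r s C S Xs R D f \<longleftrightarrow>
     (\<forall>e\<in>Ed. R e \<subseteq> Xs) \<and> (\<forall>v\<in>V. D v \<subseteq> Xs) \<and>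
     (\<forall>Y\<in>C_all V C. \<forall>d\<in>Y. \<forall>e\<in>Y. d \<noteq> e \<longrightarrow> R e \<inter> R d = {}) \<and>
     (\<forall>u\<in>V. \<forall>v\<in>V. u \<noteq> v \<longrightarrow> D u \<inter> D v = {}) \<and>
     (\<forall>e\<in>Ed. R e \<subseteq> D (s e)) \<and>
     (\<forall>v\<in>V. \<not> is_sink Ed s v \<longrightarrow> (\<forall>Y\<in>S \<inter> C v. D v = (\<Union>e\<in>Y. R e))) \<and>
     (\<forall>e\<in>Ed. bij_betw (f e) (D (r e)) (R e))"

end

theory Submission
  imports Defs
begin

lemma blk_sub:
  assumes "separated_graph V Ed r s C" "v \<in> V" "X \<in> C v" "e \<in> X"
  shows "e \<in> Ed \<and> s e = v"
proof -
  have "\<not> is_sink Ed s v" using assms unfolding separated_graph_def by (metis empty_iff)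
  hence "\<Union>(C v) = source_set Ed s v" using assms unfolding separated_graph_def by metis
  thus ?thesis using assms(3,4) unfolding source_set_def by blast
qed

lemma blk_eq:
  assumes "separated_graph V Ed r s C" "v \<in> V" "X \<in> C v" "Y \<in> C v" "e \<in> X" "e \<in> Y"
  shows "X = Y"
proof -
  have "\<not> is_sink Ed s v" using assms unfolding separated_graph_def by (metis empty_iff)
  hence "\<forall>X\<in>C v. \<forall>Y\<in>C v. X \<noteq> Y \<longrightarrow> X \<inter> Y = {}" using assms unfolding separated_graph_def by metis
  thus ?thesis using assms(3-6) by blast
qed

lemma blk_ne:
  assumes "separated_graph V Ed r s C" "v \<in> V" "X \<in> C v"
  shows "X \<noteq> {}"
proof -
  have "\<not> is_sink Ed s v" using assms unfolding separated_graph_def by (metis empty_iff)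
  thus ?thesis using assms unfolding separated_graph_def by metis
qed

lemma nonsink_cover:
  assumes "separated_graph V Ed r s C" "v \<in> V" "\<not> is_sink Ed s v"
  shows "\<Union>(C v) = source_set Ed s v"
  using assms unfolding separated_graph_def by metis

lemma sg_rs: "separated_graph V Ed r s C \<Longrightarrow> e \<in> Ed \<Longrightarrow> r e \<in> V \<and> s e \<in> V"
  unfolding separated_graph_def by blast

definition Dc :: "'e set \<Rightarrow> ('e \<Rightarrow> 'v) \<Rightarrow> ('v \<Rightarrow> 'e set set) \<Rightarrow> 'v \<Rightarrow> ('v \<times> 'e set \<times> nat) set" where
  "Dc Ed s C v = {(w,F,n). w = v \<and> finite F \<and> F \<subseteq> source_set Ed s v \<and>
      (\<forall>X\<in>C v. \<forall>a\<in>F\<inter>X. \<forall>b\<in>F\<inter>X. a = b)}"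

definition Rc :: "'e set \<Rightarrow> ('e \<Rightarrow> 'v) \<Rightarrow> ('v \<Rightarrow> 'e set set) \<Rightarrow> 'e set set \<Rightarrow> 'e \<Rightarrow> ('v \<times> 'e set \<times> nat) set" where
  "Rc Ed s C S e = {(w,F,n) \<in> Dc Ed s C (s e). e \<in> F \<or>
      (\<exists>X\<in>C (s e) \<inter> S. e \<in> X \<and> F \<inter> X = {} \<and> e = (SOME x. x \<in> X))}"

lemma Dc_memI: "finite F \<Longrightarrow> F \<subseteq> source_set Ed s v \<Longrightarrow>
   (\<forall>X\<in>C v. \<forall>a\<in>F\<inter>X. \<forall>b\<in>F\<inter>X. a = b) \<Longrightarrow> (v,F,n) \<in> Dc Ed s C v"
  by (simp add: Dc_def)

lemma Dc_countable:
  assumes "countable Ed" shows "countable (Dc Ed s C v)"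
proof -
  have "Dc Ed s C v \<subseteq> {v} \<times> {F. finite F \<and> F \<subseteq> Ed} \<times> UNIV"
    unfolding Dc_def source_set_def by auto
  moreover have "countable ({v} \<times> {F. finite F \<and> F \<subseteq> Ed} \<times> (UNIV::nat set))"
    using assms countable_Collect_finite_subset by auto
  ultimately show ?thesis using countable_subset by blast
qed

lemma Dc_infinite: "infinite (Dc (Ed::'e set) s C v)"
proof -
  have "range (\<lambda>n::nat. (v, {}::'e set, n)) \<subseteq> Dc Ed s C v" unfolding Dc_def by auto
  moreover have "infinite (range (\<lambda>n::nat. (v, {}::'e set, n)))"
    by (rule range_inj_infinite) (auto simp: inj_def)
  ultimately show ?thesis using infinite_super by blast
qed

lemma Rc_infinite:
  assumes "e \<in> Ed" shows "infinite (Rc Ed s C S e)"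
proof -
  have "range (\<lambda>n::nat. (s e, {e}, n)) \<subseteq> Rc Ed s C S e"
    using assms unfolding Rc_def Dc_def source_set_def by auto
  moreover have "infinite (range (\<lambda>n::nat. (s e, {e}, n)))"
    by (rule range_inj_infinite) (auto simp: inj_def)
  ultimately show ?thesis using infinite_super by blast
qed

lemma Rc_sub: "Rc Ed s C S e \<subseteq> Dc Ed s C (s e)"
  unfolding Rc_def by auto


lemma abstract_construction:
  fixes V :: "'v set" and Ed :: "'e set" and S :: "'e set set"
  assumes sg: "separated_graph V Ed r s C" and cE: "countable Ed"
  defines "Xs \<equiv> (\<Union>v\<in>V. Dc Ed s C v)"
    and "R \<equiv> Rc Ed s C S" and "D \<equiv> Dc Ed s C"
    and "f \<equiv> (\<lambda>e. from_nat_into (Rc Ed s C S e) \<circ> to_nat_on (Dc Ed s C (r e)))"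
  shows "algebraic_branching_system V Ed r s C S Xs R D f \<and>
           (\<forall>v\<in>V. \<not> is_sink Ed s v \<longrightarrow>
              (\<forall>X\<in>C v. \<forall>Y\<in>C v. X \<noteq> Y \<longrightarrow>
                 (\<forall>e\<in>X. \<forall>g\<in>Y. R e \<inter> R g \<noteq> {})) \<and>
              (\<forall>X\<in>C v - S. (\<Union>e\<in>X. R e) \<subset> D v) \<and>
              (\<forall>X\<in>C v - S. \<forall>Y\<in>C v - S. X \<noteq> Y \<longrightarrow>
                 (\<Union>e\<in>X. R e) \<noteq> (\<Union>g\<in>Y. R g)))"
proof -
  have sV: "s e \<in> V" "r e \<in> V" if "e \<in> Ed" for e using sg_rs[OF sg that] by auto
  have A1: "\<forall>e\<in>Ed. R e \<subseteq> Xs"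
  proof
    fix e assume e: "e \<in> Ed"
    have "Dc Ed s C (s e) \<subseteq> Xs" unfolding Xs_def using sV(1)[OF e] by (rule UN_upper)
    thus "R e \<subseteq> Xs" unfolding R_def using Rc_sub by (rule order_trans[rotated])
  qed
  have A2: "\<forall>v\<in>V. D v \<subseteq> Xs" unfolding D_def Xs_def by blast
  have A3: "\<forall>Y\<in>C_all V C. \<forall>d\<in>Y. \<forall>e\<in>Y. d \<noteq> e \<longrightarrow> R e \<inter> R d = {}"
  proof (intro ballI impI)
    fix Y d e assume Y: "Y \<in> C_all V C" and d: "d \<in> Y" and e: "e \<in> Y" and de: "d \<noteq> e"
    then obtain v where v: "v \<in> V" "Y \<in> C v" unfolding C_all_def by auto
    have sd: "s d = v" and se: "s e = v" using blk_sub[OF sg v] d e by auto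
    show "R e \<inter> R d = {}"
    proof (rule ccontr)
      assume "R e \<inter> R d \<noteq> {}"
      then obtain w F n where p: "(w,F,n) \<in> R e" "(w,F,n) \<in> R d" by auto
      hence Dp: "(w,F,n) \<in> Dc Ed s C v" using Rc_sub[of Ed s C S e] se unfolding R_def by auto
      hence one: "\<forall>a\<in>F\<inter>Y. \<forall>b\<in>F\<inter>Y. a = b" using v unfolding Dc_def by auto
      have ce: "e \<in> F \<or> (F \<inter> Y = {} \<and> e = (SOME x. x \<in> Y))"
        using p(1) se blk_eq[OF sg v(1) _ v(2) _ e] unfolding R_def Rc_def by auto
      have cd: "d \<in> F \<or> (F \<inter> Y = {} \<and> d = (SOME x. x \<in> Y))"
        using p(2) sd blk_eq[OF sg v(1) _ v(2) _ d] unfolding R_def Rc_def by auto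
      show False using ce cd one d e de by blast
    qed
  qed
  have A4: "\<forall>u\<in>V. \<forall>v\<in>V. u \<noteq> v \<longrightarrow> D u \<inter> D v = {}" unfolding D_def Dc_def by auto
  have A5: "\<forall>e\<in>Ed. R e \<subseteq> D (s e)" unfolding R_def D_def by (intro ballI Rc_sub)
  have A6: "\<forall>v\<in>V. \<not> is_sink Ed s v \<longrightarrow> (\<forall>Y\<in>S \<inter> C v. D v = (\<Union>e\<in>Y. R e))"
  proof (intro ballI impI)
    fix v Y assume v: "v \<in> V" and ns: "\<not> is_sink Ed s v" and Y: "Y \<in> S \<inter> C v"
    have sY: "\<And>e. e \<in> Y \<Longrightarrow> s e = v" using blk_sub[OF sg v, of Y] Y by simp
    show "D v = (\<Union>e\<in>Y. R e)"
    proof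
      show "(\<Union>e\<in>Y. R e) \<subseteq> D v"
      proof (rule UN_least)
        fix e assume "e \<in> Y" thus "R e \<subseteq> D v" using Rc_sub[of Ed s C S e] sY unfolding R_def D_def by simp
      qed
      show "D v \<subseteq> (\<Union>e\<in>Y. R e)"
      proof
        fix p assume p: "p \<in> D v"
        then obtain F n where pF: "p = (v,F,n)" unfolding D_def Dc_def by auto
        show "p \<in> (\<Union>e\<in>Y. R e)"
        proof (cases "F \<inter> Y = {}")
          case True
          define e where "e = (SOME x. x \<in> Y)"
          have eY: "e \<in> Y" unfolding e_def using blk_ne[OF sg v] Y by (simp add: some_in_eq)
          have "p \<in> R e" using p pF True eY sY[OF eY] Y unfolding R_def D_def Rc_def e_def by auto
          thus ?thesis using eY by blast
        next
          case False
          then obtain e where "e \<in> F" "e \<in> Y" by auto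
          hence "p \<in> R e" using p pF sY unfolding R_def D_def Rc_def by auto
          thus ?thesis using \<open>e \<in> Y\<close> by blast
        qed
      qed
    qed
  qed
  have A7: "\<forall>e\<in>Ed. bij_betw (f e) (D (r e)) (R e)"
  proof
    fix e assume e: "e \<in> Ed"
    have cR: "countable (R e)" using A1 e Dc_countable[OF cE] sV e unfolding R_def
      by (meson Rc_sub countable_subset)
    have "bij_betw (to_nat_on (Dc Ed s C (r e))) (Dc Ed s C (r e)) UNIV"
      by (rule to_nat_on_infinite[OF Dc_countable[OF cE] Dc_infinite])
    moreover have "bij_betw (from_nat_into (Rc Ed s C S e)) UNIV (Rc Ed s C S e)"
      using cR Rc_infinite[OF e] unfolding R_def by (intro bij_betw_from_nat_into)
    ultimately show "bij_betw (f e) (D (r e)) (R e)" unfolding f_def D_def R_def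
      by (rule bij_betw_trans)
  qed
  have B: "\<forall>v\<in>V. \<not> is_sink Ed s v \<longrightarrow>
              (\<forall>X\<in>C v. \<forall>Y\<in>C v. X \<noteq> Y \<longrightarrow>
                 (\<forall>e\<in>X. \<forall>g\<in>Y. R e \<inter> R g \<noteq> {})) \<and>
              (\<forall>X\<in>C v - S. (\<Union>e\<in>X. R e) \<subset> D v) \<and>
              (\<forall>X\<in>C v - S. \<forall>Y\<in>C v - S. X \<noteq> Y \<longrightarrow>
                 (\<Union>e\<in>X. R e) \<noteq> (\<Union>g\<in>Y. R g))"
  proof (intro ballI impI conjI)
    fix v assume v: "v \<in> V" and ns: "\<not> is_sink Ed s v"
    note bs = blk_sub[OF sg v] and be = blk_eq[OF sg v]
    {
      fix X Y e g assume X: "X \<in> C v" and Y: "Y \<in> C v" and XY: "X \<noteq> Y" and e: "e \<in> X" and g: "g \<in> Y"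
      have ee: "e \<in> Ed \<and> s e = v" using bs[of X e] X e by simp
      have gg: "g \<in> Ed \<and> s g = v" using bs[of Y g] Y g by simp
      have ss: "{e,g} \<subseteq> source_set Ed s v" using ee gg unfolding source_set_def by auto
      have one: "\<forall>Z\<in>C v. \<forall>a\<in>{e,g}\<inter>Z. \<forall>b\<in>{e,g}\<inter>Z. a = b"
      proof (intro ballI)
        fix Z a b assume Z: "Z \<in> C v" and a: "a \<in> {e,g}\<inter>Z" and b: "b \<in> {e,g}\<inter>Z"
        show "a = b"
        proof (rule ccontr)
          assume "a \<noteq> b"
          hence "e \<in> Z \<and> g \<in> Z" using a b by auto
          hence "Z = X" "Z = Y" using be[of Z X e] be[of Z Y g] Z X Y e g by auto
          thus False using XY by simp
        qed
      qed
      have "(v,{e,g},0) \<in> Dc Ed s C v" by (rule Dc_memI[where F="{e,g}" and C=C and n=0, OF _ ss one]) simp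
      hence "(v,{e,g},0) \<in> R e \<inter> R g" using ee gg unfolding R_def Rc_def by auto
      thus "R e \<inter> R g \<noteq> {}" by blast
    }
    {
      fix X assume X: "X \<in> C v - S"
      have "(v,{},0) \<in> D v" unfolding D_def Dc_def by auto
      moreover have "(v,{},0) \<notin> R e" if "e \<in> X" for e
      proof
        assume "(v,{},0) \<in> R e"
        then obtain X' where X': "X' \<in> C (s e)" "X' \<in> S" "e \<in> X'" unfolding R_def Rc_def by auto
        have "s e = v" using bs[of X e] X that by simp
        hence "X' = X" using be[of X' X e] X' X that by simp
        thus False using X' X by simp
      qed
      moreover have "(\<Union>e\<in>X. R e) \<subseteq> D v"
      proof (rule UN_least)
        fix e assume "e \<in> X" thus "R e \<subseteq> D v" using Rc_sub[of Ed s C S e] bs[of X e] X unfolding R_def D_def by auto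
      qed
      ultimately show "(\<Union>e\<in>X. R e) \<subset> D v" by blast
    }
    {
      fix X Y assume X: "X \<in> C v - S" and Y: "Y \<in> C v - S" and XY: "X \<noteq> Y"
      have "X \<noteq> {}" using blk_ne[OF sg v] X by simp
      then obtain e where e: "e \<in> X" by blast
      have ee: "e \<in> Ed \<and> s e = v" using bs[of X e] X e by simp
      have ss: "{e} \<subseteq> source_set Ed s v" using ee unfolding source_set_def by auto
      have "(v,{e},0) \<in> Dc Ed s C v" using ss unfolding Dc_def by auto
      hence "(v,{e},0) \<in> R e" using ee unfolding R_def Rc_def by auto
      moreover have "(v,{e},0) \<notin> R g" if "g \<in> Y" for g
      proof
        assume a: "(v,{e},0) \<in> R g"
        have "s g = v" using bs[of Y g] Y that by simp
        show False
        proof (cases "g = e")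
          case True thus False using be[of X Y e] X Y XY e that by simp
        next
          case False
          then obtain X' where "X' \<in> C v" "X' \<in> S" "g \<in> X'" using a \<open>s g = v\<close> unfolding R_def Rc_def by auto
          moreover have "X' = Y" using be[of X' Y g] calculation Y that by simp
          ultimately show False using Y by simp
        qed
      qed
      ultimately show "(\<Union>e\<in>X. R e) \<noteq> (\<Union>g\<in>Y. R g)" using e by blast
    }
  qed
  show ?thesis unfolding algebraic_branching_system_def by (intro conjI A1 A2 A3 A4 A5 A6 A7 B)
qed


definition good where
  "good V Ed r s C S Xs R D f \<longleftrightarrow>
     algebraic_branching_system V Ed r s C S Xs R D f \<and>
           (\<forall>v\<in>V. \<not> is_sink Ed s v \<longrightarrow>
              (\<forall>X\<in>C v. \<forall>Y\<in>C v. X \<noteq> Y \<longrightarrow>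
                 (\<forall>e\<in>X. \<forall>g\<in>Y. R e \<inter> R g \<noteq> {})) \<and>
              (\<forall>X\<in>C v - S. (\<Union>e\<in>X. R e) \<subset> D v) \<and>
              (\<forall>X\<in>C v - S. \<forall>Y\<in>C v - S. X \<noteq> Y \<longrightarrow>
                 (\<Union>e\<in>X. R e) \<noteq> (\<Union>g\<in>Y. R g)))"

lemma transfer_real:
  fixes Xs :: "'x set"
  assumes sg: "separated_graph V Ed r s C" and cX: "countable Xs"
    and G: "good V Ed r s C S Xs R D f"
  shows "\<exists>(Xs' :: real set) R' D' f'. good V Ed r s C S Xs' R' D' f'"
proof -
  define h where "h = (\<lambda>x. real (to_nat_on Xs x))"
  have inj: "inj_on h Xs" unfolding h_def inj_on_def using inj_on_to_nat_on[OF cX]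
    by (auto simp: inj_on_def)
  note G' = G[unfolded good_def algebraic_branching_system_def]
  note ABS = conjunct1[OF G'] and EXT = conjunct2[OF G']
  note a1 = conjunct1[OF ABS]
  note a2 = conjunct1[OF conjunct2[OF ABS]]
  note a3 = conjunct1[OF conjunct2[OF conjunct2[OF ABS]]]
  note a4 = conjunct1[OF conjunct2[OF conjunct2[OF conjunct2[OF ABS]]]]
  note a5 = conjunct1[OF conjunct2[OF conjunct2[OF conjunct2[OF conjunct2[OF ABS]]]]]
  note a6 = conjunct1[OF conjunct2[OF conjunct2[OF conjunct2[OF conjunct2[OF conjunct2[OF ABS]]]]]]
  note a7 = conjunct2[OF conjunct2[OF conjunct2[OF conjunct2[OF conjunct2[OF conjunct2[OF ABS]]]]]]
  have RX: "R e \<subseteq> Xs" if "e \<in> Ed" for e using a1 that by blast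
  have DX: "D v \<subseteq> Xs" if "v \<in> V" for v using a2 that by blast
  have blkE: "e \<in> Ed" if "v \<in> V" "Y \<in> C v" "e \<in> Y" for v Y e using blk_sub[OF sg that] by simp
  have injR: "\<And>A B. A \<subseteq> Xs \<Longrightarrow> B \<subseteq> Xs \<Longrightarrow> h ` A \<inter> h ` B = h ` (A \<inter> B)"
    using inj_on_image_Int[OF inj] by simp
  have eqI: "\<And>A B. A \<subseteq> Xs \<Longrightarrow> B \<subseteq> Xs \<Longrightarrow> h ` A = h ` B \<longleftrightarrow> A = B"
    using inj_on_image_eq_iff[OF inj] by simp
  define R' where "R' = (\<lambda>e. h ` R e)"
  define D' where "D' = (\<lambda>v. h ` D v)"
  define f' where "f' = (\<lambda>e. h \<circ> f e \<circ> inv_into Xs h)"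
  have B1: "\<forall>e\<in>Ed. R' e \<subseteq> h ` Xs" unfolding R'_def using RX by blast
  have B2: "\<forall>v\<in>V. D' v \<subseteq> h ` Xs" unfolding D'_def using DX by blast
  have B3: "\<forall>Y\<in>C_all V C. \<forall>d\<in>Y. \<forall>e\<in>Y. d \<noteq> e \<longrightarrow> R' e \<inter> R' d = {}"
  proof (intro ballI impI)
    fix Y d e assume Y: "Y \<in> C_all V C" and d: "d \<in> Y" and e: "e \<in> Y" and de: "d \<noteq> e"
    then obtain v where v: "v \<in> V" "Y \<in> C v" unfolding C_all_def by auto
    have "R e \<inter> R d = {}" using a3 Y d e de by blast
    moreover have "R' e \<inter> R' d = h ` (R e \<inter> R d)" unfolding R'_def
      using injR RX blkE[OF v d] blkE[OF v e] by simp
    ultimately show "R' e \<inter> R' d = {}" by simp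
  qed
  have B4: "\<forall>u\<in>V. \<forall>v\<in>V. u \<noteq> v \<longrightarrow> D' u \<inter> D' v = {}"
  proof (intro ballI impI)
    fix u v assume "u \<in> V" "v \<in> V" "u \<noteq> v"
    moreover have "D u \<inter> D v = {}" using a4 calculation by blast
    ultimately show "D' u \<inter> D' v = {}" unfolding D'_def using injR DX by (metis image_empty)
  qed
  have B5: "\<forall>e\<in>Ed. R' e \<subseteq> D' (s e)" unfolding R'_def D'_def using a5 by (intro ballI image_mono) blast
  have B6: "\<forall>v\<in>V. \<not> is_sink Ed s v \<longrightarrow> (\<forall>Y\<in>S \<inter> C v. D' v = (\<Union>e\<in>Y. R' e))"
  proof (intro ballI impI)
    fix v Y assume "v \<in> V" "\<not> is_sink Ed s v" "Y \<in> S \<inter> C v"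
    hence "D v = (\<Union>e\<in>Y. R e)" using a6 by blast
    thus "D' v = (\<Union>e\<in>Y. R' e)" unfolding D'_def R'_def by (simp add: image_UN)
  qed
  have B7: "\<forall>e\<in>Ed. bij_betw (f' e) (D' (r e)) (R' e)"
  proof
    fix e assume e: "e \<in> Ed"
    have rV: "r e \<in> V" using sg_rs[OF sg e] by simp
    have b1: "bij_betw (inv_into Xs h) (h ` D (r e)) (D (r e))"
      by (rule bij_betw_inv_into_subset[OF inj_on_imp_bij_betw[OF inj] DX[OF rV]]) simp
    have b2: "bij_betw (f e) (D (r e)) (R e)" using a7 e by blast
    have b3: "bij_betw h (R e) (h ` R e)" using inj_on_subset[OF inj RX[OF e]]
      by (rule inj_on_imp_bij_betw)
    have "bij_betw (h \<circ> f e) (D (r e)) (h ` R e)" by (rule bij_betw_trans[OF b2 b3])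
    hence "bij_betw ((h \<circ> f e) \<circ> inv_into Xs h) (h ` D (r e)) (h ` R e)"
      by (rule bij_betw_trans[OF b1])
    thus "bij_betw (f' e) (D' (r e)) (R' e)" unfolding f'_def D'_def R'_def by (simp add: comp_assoc)
  qed
  have B8: "\<forall>v\<in>V. \<not> is_sink Ed s v \<longrightarrow>
              (\<forall>X\<in>C v. \<forall>Y\<in>C v. X \<noteq> Y \<longrightarrow>
                 (\<forall>e\<in>X. \<forall>g\<in>Y. R' e \<inter> R' g \<noteq> {})) \<and>
              (\<forall>X\<in>C v - S. (\<Union>e\<in>X. R' e) \<subset> D' v) \<and>
              (\<forall>X\<in>C v - S. \<forall>Y\<in>C v - S. X \<noteq> Y \<longrightarrow>
                 (\<Union>e\<in>X. R' e) \<noteq> (\<Union>g\<in>Y. R' g))"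
  proof (intro ballI impI conjI)
    fix v assume v: "v \<in> V" and ns: "\<not> is_sink Ed s v"
    have P: "(\<forall>X\<in>C v. \<forall>Y\<in>C v. X \<noteq> Y \<longrightarrow>
                 (\<forall>e\<in>X. \<forall>g\<in>Y. R e \<inter> R g \<noteq> {})) \<and>
              (\<forall>X\<in>C v - S. (\<Union>e\<in>X. R e) \<subset> D v) \<and>
              (\<forall>X\<in>C v - S. \<forall>Y\<in>C v - S. X \<noteq> Y \<longrightarrow>
                 (\<Union>e\<in>X. R e) \<noteq> (\<Union>g\<in>Y. R g))" by (rule mp[OF bspec[OF EXT v] ns])
    have UX: "(\<Union>e\<in>X. R e) \<subseteq> Xs" if "X \<in> C v" for X by (rule UN_least, rule RX, rule blkE[OF v that])
    {
      fix X Y e g assume X: "X \<in> C v" and Y: "Y \<in> C v" and XY: "X \<noteq> Y" and e: "e \<in> X" and g: "g \<in> Y"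
      have "R e \<inter> R g \<noteq> {}" using conjunct1[OF P] X Y XY e g by blast
      moreover have "R' e \<inter> R' g = h ` (R e \<inter> R g)" unfolding R'_def
        using injR[OF RX[OF blkE[OF v X e]] RX[OF blkE[OF v Y g]]] by simp
      ultimately show "R' e \<inter> R' g \<noteq> {}" by simp
    }
    {
      fix X assume X: "X \<in> C v - S"
      have "(\<Union>e\<in>X. R e) \<subset> D v" using conjunct1[OF conjunct2[OF P]] X by blast
      moreover have sub: "(\<Union>e\<in>X. R e) \<subseteq> Xs" using UX X by simp
      ultimately have "h ` (\<Union>e\<in>X. R e) \<subset> h ` D v"
        using eqI[OF sub DX[OF v]] by blast
      thus "(\<Union>e\<in>X. R' e) \<subset> D' v" unfolding R'_def D'_def by (simp add: image_UN)
    }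
    {
      fix X Y assume X: "X \<in> C v - S" and Y: "Y \<in> C v - S" and XY: "X \<noteq> Y"
      have "(\<Union>e\<in>X. R e) \<noteq> (\<Union>g\<in>Y. R g)" using conjunct2[OF conjunct2[OF P]] X Y XY by blast
      hence "h ` (\<Union>e\<in>X. R e) \<noteq> h ` (\<Union>g\<in>Y. R g)" using eqI UX X Y by simp
      thus "(\<Union>e\<in>X. R' e) \<noteq> (\<Union>g\<in>Y. R' g)" unfolding R'_def by (simp add: image_UN)
    }
  qed
  have "good V Ed r s C S (h ` Xs) R' D' f'"
    unfolding good_def algebraic_branching_system_def by (intro conjI B1 B2 B3 B4 B5 B6 B7 B8)
  thus ?thesis by blast
qed

theorem theorem3p1:
  fixes V :: "'v set" and Ed :: "'e set" and r s :: "'e \<Rightarrow> 'v"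
    and C :: "'v \<Rightarrow> 'e set set" and S :: "'e set set"
  assumes "separated_graph V Ed r s C"
    and "countable V" and "countable Ed"
    and "S \<subseteq> C_fin V C"
  shows "\<exists>(Xs :: real set) R D f.
           algebraic_branching_system V Ed r s C S Xs R D f \<and>
           (\<forall>v\<in>V. \<not> is_sink Ed s v \<longrightarrow>
              (\<forall>X\<in>C v. \<forall>Y\<in>C v. X \<noteq> Y \<longrightarrow>
                 (\<forall>e\<in>X. \<forall>g\<in>Y. R e \<inter> R g \<noteq> {})) \<and>
              (\<forall>X\<in>C v - S. (\<Union>e\<in>X. R e) \<subset> D v) \<and>
              (\<forall>X\<in>C v - S. \<forall>Y\<in>C v - S. X \<noteq> Y \<longrightarrow>
                 (\<Union>e\<in>X. R e) \<noteq> (\<Union>g\<in>Y. R g)))"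
proof -
  have G: "good V Ed r s C S (\<Union>v\<in>V. Dc Ed s C v) (Rc Ed s C S) (Dc Ed s C)
      (\<lambda>e. from_nat_into (Rc Ed s C S e) \<circ> to_nat_on (Dc Ed s C (r e)))"
    unfolding good_def by (rule abstract_construction[OF assms(1,3)])
  have cX: "countable (\<Union>v\<in>V. Dc Ed s C v)"
    using assms(2) by (rule countable_UN) (rule Dc_countable[OF assms(3)])
  show ?thesis using transfer_real[OF assms(1) cX G] unfolding good_def .
qed

end
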